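(* Let $f : 2^N \to \mathbb{R}_{\ge 0}$ be a non-negative submodular function, let $r \ge 1$ be an integer, $\alpha \in [0,1]$ and $v^\star \in \mathbb{R}$. Consider a randomized procedure with $S_0 = \emptyset$ and $S_i = S_{i-1} \cup T_i$ for $i = 1,\dots,r$, where $T_i$ is a random set (returned by the subroutine SIEVE at iteration $i$ of BLITS). Assume that for every $i \in \{1,\dots,r\}$, given the current solution $S_{i-1}$, the returned set satisfies $$\mathbb{E}\left[f_{S_{i-1}}(T_i)\right] \ge \frac{\alpha}{r}\left(\left(1-\frac{1}{r}\right)^{i-1} v^\star - f(S_{i-1})\right).$$ Then $\mathbb{E}[f(S_r)] \ge \frac{\alpha}{e}\, v^\star$.
   Context: For sets $S,T \subseteq N$, $f_S(T) = f(S\cup T) - f(S)$. $f$ is submodular if $f(S\cup\{a\}) - f(S) \ge f(T\cup\{a\}) - f(T)$ whenever $S\subseteq T$ and $a\notin T$. BLITS is the algorithm that starts with $S=\emptyset$ and for $r$ iterations adds to $S$ a block returned by a subroutine called SIEVE. *)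

theory Defs
  imports "HOL-Probability.Probability_Mass_Function"
begin

definition submodular_on :: "'a set \<Rightarrow> ('a set \<Rightarrow> real) \<Rightarrow> bool" where
  "submodular_on N f \<longleftrightarrow>
     (\<forall>S T a. S \<subseteq> T \<and> T \<subseteq> N \<and> a \<in> N \<and> a \<notin> T \<longrightarrow>
        f (insert a S) - f S \<ge> f (insert a T) - f T)"

definition marg :: "('a set \<Rightarrow> real) \<Rightarrow> 'a set \<Rightarrow> 'a set \<Rightarrow> real" where
  "marg f S T = f (S \<union> T) - f S"

text \<open>Distribution of the solution S_i: S_0 = {}, and S_i = S_(i-1) \<union> T_i where,
  given the current solution S, T_i is drawn from the kernel K i S (the SIEVE step).\<close>
fun blits_dist :: "(nat \<Rightarrow> 'a set \<Rightarrow> 'a set pmf) \<Rightarrow> nat \<Rightarrow> 'a set pmf" where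
  "blits_dist K 0 = return_pmf {}"
| "blits_dist K (Suc i) =
     bind_pmf (blits_dist K i) (\<lambda>S. map_pmf (\<lambda>T. S \<union> T) (K (Suc i) S))"

end

theory Submission
  imports Defs
begin

lemma qpow_bound:
  fixes r :: nat assumes "r \<ge> 1"
  shows "exp (-1) \<le> (1 - 1 / real r) ^ (r - 1)"
proof (cases "r = 1")
  case True then show ?thesis by simp
next
  case False
  define m where "m = r - 1"
  have m: "m > 0" "real r = real m + 1" using False assms by (auto simp: m_def)
  have "(1 + 1 / real m) ^ m \<le> exp (1 / real m) ^ m"
    by (rule power_mono) (auto intro: exp_ge_add_one_self order_trans[OF _ exp_ge_add_one_self])
  also have "\<dots> = exp 1" using m by (simp add: exp_of_nat_mult[symmetric])
  finally have h: "(1 + 1 / real m) ^ m \<le> exp 1" .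
  have "(1 - 1 / real r) * (1 + 1 / real m) = 1" using m by (simp add: field_simps) (smt (verit) of_nat_0_less_iff mult_pos_pos)
  hence "(1 - 1 / real r) ^ m * (1 + 1 / real m) ^ m = 1" by (metis power_mult_distrib power_one)
  hence e: "(1 - 1 / real r) ^ m = 1 / (1 + 1 / real m) ^ m"
    using m by (simp add: field_simps)
  have pos: "(1 + 1 / real m) ^ m > 0" by (intro zero_less_power add_pos_nonneg) auto
  have "exp (-1) = 1 / exp (1::real)" by (simp add: exp_minus inverse_eq_divide)
  also have "\<dots> \<le> 1 / (1 + 1 / real m) ^ m"
    using h pos by (intro divide_left_mono) auto
  finally show ?thesis using e by (simp add: m_def)
qed

theorem lemma2:
  fixes N :: "'a set" and f :: "'a set \<Rightarrow> real"
    and K :: "nat \<Rightarrow> 'a set \<Rightarrow> 'a set pmf"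
    and r :: nat and \<alpha> v :: real
  assumes "finite N"
    and "\<forall>S. S \<subseteq> N \<longrightarrow> f S \<ge> 0"
    and "submodular_on N f"
    and "r \<ge> 1"
    and "0 \<le> \<alpha>" and "\<alpha> \<le> 1"
    and "\<forall>i\<in>{1..r}. \<forall>S\<in>set_pmf (blits_dist K (i - 1)). set_pmf (K i S) \<subseteq> Pow N"
    and "\<forall>i\<in>{1..r}. \<forall>S\<in>set_pmf (blits_dist K (i - 1)).
           measure_pmf.expectation (K i S) (\<lambda>T. marg f S T)
             \<ge> \<alpha> / real r * ((1 - 1 / real r) ^ (i - 1) * v - f S)"
  shows "measure_pmf.expectation (blits_dist K r) f \<ge> \<alpha> / exp 1 * v"
proof -
  note fin = assms(1) and fnn = assms(2) and r1 = assms(4) and a0 = assms(5) and a1 = assms(6)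
  define D where "D j = blits_dist K j" for j
  define a where "a j = measure_pmf.expectation (D j) f" for j
  define q where "q = 1 - 1 / real r"
  have suppK: "set_pmf (K (Suc j) S) \<subseteq> Pow N" if "Suc j \<le> r" "S \<in> set_pmf (D j)" for j S
    using assms(7) that unfolding D_def by (metis One_nat_def Suc_le_mono atLeastAtMost_iff diff_Suc_1 le0)
  have hypK: "measure_pmf.expectation (K (Suc j) S) (\<lambda>T. marg f S T)
             \<ge> \<alpha> / real r * (q ^ j * v - f S)" if "Suc j \<le> r" "S \<in> set_pmf (D j)" for j S
    using assms(8) that unfolding D_def q_def by (metis One_nat_def Suc_le_mono atLeastAtMost_iff diff_Suc_1 le0)
  have supp: "j \<le> r \<Longrightarrow> set_pmf (D j) \<subseteq> Pow N" for j
  proof (induction j)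
    case 0 then show ?case by (simp add: D_def)
  next
    case (Suc j)
    show ?case
    proof
      fix X assume "X \<in> set_pmf (D (Suc j))"
      then obtain S T where "S \<in> set_pmf (D j)" "T \<in> set_pmf (K (Suc j) S)" "X = S \<union> T"
        by (auto simp: D_def)
      then show "X \<in> Pow N" using Suc suppK[of j S] by auto
    qed
  qed
  have finD: "j \<le> r \<Longrightarrow> finite (set_pmf (D j))" for j
    using supp fin by (meson finite_Pow_iff finite_subset)
  have anonneg: "j \<le> r \<Longrightarrow> a j \<ge> 0" for j
    unfolding a_def using supp fnn by (intro integral_nonneg_AE AE_pmfI) blast
  have step: "a (Suc j) \<ge> (1 - \<alpha> / real r) * a j + \<alpha> / real r * q ^ j * v" if sj: "Suc j \<le> r" for j
  proof -
    have fj: "finite (set_pmf (D j))" using finD sj by simp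
    have finK: "finite (set_pmf (K (Suc j) S))" if "S \<in> set_pmf (D j)" for S
      using suppK[OF sj that] fin by (meson finite_Pow_iff finite_subset)
    define g where "g S = measure_pmf.expectation (K (Suc j) S) (\<lambda>T. f (S \<union> T))" for S
    have "a (Suc j) = (\<Sum>S\<in>set_pmf (D j). pmf (D j) S *\<^sub>R g S)"
      unfolding a_def g_def D_def
      by (subst blits_dist.simps, subst pmf_expectation_bind[OF fj[unfolded D_def]])
         (auto simp: finK[unfolded D_def])
    also have "\<dots> = measure_pmf.expectation (D j) g"
      by (rule integral_measure_pmf[symmetric]) (auto simp: fj)
    finally have e1: "a (Suc j) = measure_pmf.expectation (D j) g" .
    have gS: "g S \<ge> (1 - \<alpha> / real r) * f S + \<alpha> / real r * q ^ j * v" if "S \<in> set_pmf (D j)" for S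
    proof -
      have "measure_pmf.expectation (K (Suc j) S) (\<lambda>T. marg f S T) = g S - f S"
        unfolding marg_def g_def
        by (subst Bochner_Integration.integral_diff)
           (auto intro: integrable_measure_pmf_finite finK[OF that])
      with hypK[OF sj that] show ?thesis by (simp add: algebra_simps)
    qed
    have "measure_pmf.expectation (D j) (\<lambda>S. (1 - \<alpha> / real r) * f S + \<alpha> / real r * q ^ j * v)
        \<le> measure_pmf.expectation (D j) g"
      by (intro integral_mono_AE AE_pmfI integrable_measure_pmf_finite fj gS)
    moreover have "measure_pmf.expectation (D j) (\<lambda>S. (1 - \<alpha> / real r) * f S + \<alpha> / real r * q ^ j * v)
        = (1 - \<alpha> / real r) * a j + \<alpha> / real r * q ^ j * v"
      unfolding a_def
      by (subst Bochner_Integration.integral_add) (auto intro: integrable_measure_pmf_finite fj)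
    ultimately show ?thesis using e1 by simp
  qed
  show ?thesis
  proof (cases "v \<ge> 0")
    case False
    have "a r \<ge> 0" using anonneg by simp
    moreover have "\<alpha> / exp 1 * v \<le> 0" using False a0
      by (simp add: divide_nonpos_pos mult_nonneg_nonpos)
    ultimately show ?thesis unfolding a_def D_def by linarith
  next
    case True
    have q0: "0 \<le> q" "q \<le> 1 - \<alpha> / real r" using r1 a1 unfolding q_def
      by (auto simp: field_simps)
    have claim: "Suc j \<le> r \<Longrightarrow> a (Suc j) \<ge> real (Suc j) * (\<alpha> / real r) * q ^ j * v" for j
    proof (induction j)
      case 0
      have "(1 - \<alpha> / real r) * a 0 \<ge> 0" using anonneg[of 0] q0 by simp
      with step[OF 0] show ?case by simp
    next
      case (Suc j)
      have IH: "a (Suc j) \<ge> real (Suc j) * (\<alpha> / real r) * q ^ j * v" using Suc by simp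
      have L0: "real (Suc j) * (\<alpha> / real r) * q ^ j * v \<ge> 0" using True a0 q0 by simp
      have "(1 - \<alpha> / real r) * a (Suc j) \<ge> q * a (Suc j)"
        using q0 anonneg[of "Suc j"] Suc.prems by (intro mult_right_mono) auto
      also have "q * a (Suc j) \<ge> q * (real (Suc j) * (\<alpha> / real r) * q ^ j * v)"
        using IH q0 by (intro mult_left_mono) auto
      finally have "(1 - \<alpha> / real r) * a (Suc j) \<ge> real (Suc j) * (\<alpha> / real r) * q ^ Suc j * v"
        by (simp add: algebra_simps)
      moreover have "real (Suc (Suc j)) * (\<alpha> / real r) * q ^ Suc j * v
          = real (Suc j) * (\<alpha> / real r) * q ^ Suc j * v + \<alpha> / real r * q ^ Suc j * v"
        by (simp add: add_divide_distrib[symmetric] distrib_left distrib_right algebra_simps)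
      ultimately show ?case using step[OF Suc.prems] by linarith
    qed
    obtain j where rj: "r = Suc j" using r1 by (cases r) auto
    have "a r \<ge> \<alpha> * q ^ (r - 1) * v" using claim[of j] rj r1 by simp
    moreover have "\<alpha> * exp (-1) * v \<le> \<alpha> * q ^ (r - 1) * v"
      using qpow_bound[OF r1] a0 True unfolding q_def by (intro mult_right_mono mult_left_mono) auto
    moreover have "\<alpha> / exp 1 * v = \<alpha> * exp (-1) * v" by (simp add: exp_minus inverse_eq_divide)
    ultimately show ?thesis unfolding a_def D_def by linarith
  qed
qed

end
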